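(* Let $W\in C^1(\mathbb{R})$ satisfy (W-i) there is $\eta>0$ with $W(s)\geq\eta s^2$ for $|s|\leq1$ and $W(s)\geq\eta$ for $|s|\geq1$; (W-ii) $W''(0)=1$; (W-iii) there are $M>0$, $\alpha\in[0,2)$ with $W(s)\leq M|s|^\alpha$ for all $s\geq0$. Let $\Lambda_*=\inf\left\{\frac{E(\mathbf{u})}{|C(\mathbf{u})|}:\mathbf{u}\in X,\ C(\mathbf{u})\neq0\right\}$. Then $\Lambda_*<1$.
   Context: $X=H^2(\mathbb{R})\times L^2(\mathbb{R})$ with elements $\mathbf{u}=(u,v)$; $E(\mathbf{u})=\frac12\int(v^2+u_{xx}^2)\,dx+\int W(u)\,dx$ and $C(\mathbf{u})=-\int v\,u_x\,dx$. *)

theory Defs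
  imports "HOL-Analysis.Analysis"
begin

definition test_function :: "(real \<Rightarrow> real) \<Rightarrow> bool" where
  "test_function \<phi> \<longleftrightarrow> (\<forall>n. (deriv ^^ n) \<phi> differentiable_on UNIV) \<and> bounded {x. \<phi> x \<noteq> 0}"

definition locally_integrable :: "(real \<Rightarrow> real) \<Rightarrow> bool" where
  "locally_integrable f \<longleftrightarrow> (\<forall>a b. set_integrable lborel {a..b} f)"

definition weak_deriv :: "(real \<Rightarrow> real) \<Rightarrow> (real \<Rightarrow> real) \<Rightarrow> bool" where
  "weak_deriv u g \<longleftrightarrow> locally_integrable u \<and> locally_integrable g \<and>
     (\<forall>\<phi>. test_function \<phi> \<longrightarrow>
        (LINT x|lborel. u x * deriv \<phi> x) = - (LINT x|lborel. g x * \<phi> x))"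

definition L2 :: "(real \<Rightarrow> real) \<Rightarrow> bool" where
  "L2 f \<longleftrightarrow> f \<in> borel_measurable lborel \<and> integrable lborel (\<lambda>x. (f x)\<^sup>2)"

definition H2 :: "(real \<Rightarrow> real) \<Rightarrow> (real \<Rightarrow> real) \<Rightarrow> (real \<Rightarrow> real) \<Rightarrow> bool" where
  "H2 u u1 u2 \<longleftrightarrow> L2 u \<and> L2 u1 \<and> L2 u2 \<and> weak_deriv u u1 \<and> weak_deriv u1 u2"

definition energy :: "(real \<Rightarrow> real) \<Rightarrow> (real \<Rightarrow> real) \<Rightarrow> (real \<Rightarrow> real) \<Rightarrow> (real \<Rightarrow> real) \<Rightarrow> ennreal" where
  "energy W u u2 v = (\<integral>\<^sup>+ x. ennreal (((v x)\<^sup>2 + (u2 x)\<^sup>2) / 2) \<partial>lborel)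
                     + (\<integral>\<^sup>+ x. ennreal (W (u x)) \<partial>lborel)"

definition momentum :: "(real \<Rightarrow> real) \<Rightarrow> (real \<Rightarrow> real) \<Rightarrow> real" where
  "momentum u1 v = - (LINT x|lborel. v x * u1 x)"

definition Lambda_star :: "(real \<Rightarrow> real) \<Rightarrow> ereal" where
  "Lambda_star W = Inf {enn2ereal (energy W u u2 v) / ereal \<bar>momentum u1 v\<bar> | u u1 u2 v.
       H2 u u1 u2 \<and> L2 v \<and> momentum u1 v \<noteq> 0}"

end

theory Submission
  imports Defs
begin

lemma IK:
  fixes f :: "real \<Rightarrow> real"
  assumes "compact K" "continuous_on K f"
  shows "integrable lborel (\<lambda>x. indicator K x * f x)"
    "(LINT x|lborel. indicator K x * f x) = integral K f"
proof -
  have si: "set_integrable lborel K f" unfolding set_integrable_def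
    using borel_integrable_compact[OF assms] by simp
  then show "integrable lborel (\<lambda>x. indicator K x * f x)" unfolding set_integrable_def by simp
  show "(LINT x|lborel. indicator K x * f x) = integral K f"
    using set_borel_integral_eq_integral(2)[OF si] by (simp add: set_lebesgue_integral_def)
qed

lemma L2_ind:
  fixes f :: "real \<Rightarrow> real"
  assumes "continuous_on UNIV f"
  shows "L2 (\<lambda>x. indicator {a..b} x * f x)"
proof -
  have c: "continuous_on {a..b} f" "continuous_on {a..b} (\<lambda>x. (f x)^2)"
    using assms by (auto intro!: continuous_intros intro: continuous_on_subset)
  have "(\<lambda>x. (indicator {a..b} x * f x)^2) = (\<lambda>x. indicator {a..b} x * (f x)^2)"
    by (auto simp: indicator_def fun_eq_iff)
  then show ?thesis unfolding L2_def using IK(1)[OF _ c(1)] IK(1)[OF _ c(2)]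
    by (auto intro: borel_measurable_integrable)
qed

lemma locint_ind:
  fixes f :: "real \<Rightarrow> real"
  assumes "continuous_on UNIV f"
  shows "locally_integrable (\<lambda>x. indicator {a..b} x * f x)"
  unfolding locally_integrable_def set_integrable_def
proof (intro allI)
  fix c d :: real
  have "(\<lambda>x. indicator {c..d} x *\<^sub>R (indicator {a..b} x * f x)) = (\<lambda>x. indicator ({c..d} \<inter> {a..b}) x * f x)"
    by (auto simp: indicator_def fun_eq_iff)
  moreover have "integrable lborel (\<lambda>x. indicator ({c..d} \<inter> {a..b}) x * f x)"
    by (rule IK(1)) (auto intro: continuous_on_subset[OF assms])
  ultimately show "integrable lborel (\<lambda>x. indicator {c..d} x *\<^sub>R (indicator {a..b} x * f x))" by simp
qed

lemma weak_ind:
  fixes P Q :: "real \<Rightarrow> real"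
  assumes cP: "continuous_on UNIV P" and cQ: "continuous_on UNIV Q"
    and dP: "\<And>x. (P has_real_derivative Q x) (at x)"
    and ab: "a \<le> b" and Pa: "P a = 0" and Pb: "P b = 0"
  shows "weak_deriv (\<lambda>x. indicator {a..b} x * P x) (\<lambda>x. indicator {a..b} x * Q x)"
  unfolding weak_deriv_def
proof (intro conjI allI impI locint_ind cP cQ)
  fix \<phi> :: "real \<Rightarrow> real"
  assume t: "test_function \<phi>"
  have d0: "\<phi> differentiable_on UNIV" using t unfolding test_function_def
    by (metis funpow_0)
  have d1: "deriv \<phi> differentiable_on UNIV" using t unfolding test_function_def
  proof -
    have "(deriv ^^ Suc 0) \<phi> differentiable_on UNIV" using t unfolding test_function_def by blast
    then show ?thesis by simp
  qed
  have dphi: "(\<phi> has_real_derivative deriv \<phi> x) (at x)" for x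
    using d0 by (simp add: DERIV_deriv_iff_real_differentiable differentiable_on_def)
  have cphi: "continuous_on UNIV \<phi>" using d0 differentiable_imp_continuous_on by blast
  have cdphi: "continuous_on UNIV (deriv \<phi>)" using d1 differentiable_imp_continuous_on by blast
  have c1: "continuous_on {a..b} (\<lambda>x. P x * deriv \<phi> x)" "continuous_on {a..b} (\<lambda>x. Q x * \<phi> x)"
    using cP cQ cphi cdphi by (auto intro!: continuous_intros intro: continuous_on_subset)
  have e1: "(LINT x|lborel. indicator {a..b} x * P x * deriv \<phi> x) = integral {a..b} (\<lambda>x. P x * deriv \<phi> x)"
    using IK(2)[OF _ c1(1)] by (simp add: mult.assoc)
  have e2: "(LINT x|lborel. indicator {a..b} x * Q x * \<phi> x) = integral {a..b} (\<lambda>x. Q x * \<phi> x)"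
    using IK(2)[OF _ c1(2)] by (simp add: mult.assoc)
  have ftc: "((\<lambda>x. Q x * \<phi> x + P x * deriv \<phi> x) has_integral (P b * \<phi> b - P a * \<phi> a)) {a..b}"
  proof (rule fundamental_theorem_of_calculus[OF ab])
    fix x assume "x \<in> {a..b}"
    have "((\<lambda>x. P x * \<phi> x) has_real_derivative (Q x * \<phi> x + P x * deriv \<phi> x)) (at x)"
      using DERIV_mult[OF dP dphi] by (simp add: mult.commute)
    then show "((\<lambda>x. P x * \<phi> x) has_vector_derivative (Q x * \<phi> x + P x * deriv \<phi> x)) (at x within {a..b})"
      using has_field_derivative_at_within has_real_derivative_iff_has_vector_derivative by blast
  qed
  show "(LINT x|lborel. indicator {a..b} x * P x * deriv \<phi> x) = - (LINT x|lborel. indicator {a..b} x * Q x * \<phi> x)"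
  proof -
    have i1: "(\<lambda>x. P x * deriv \<phi> x) integrable_on {a..b}" "(\<lambda>x. Q x * \<phi> x) integrable_on {a..b}"
      using c1 integrable_continuous_interval by blast+
    have "integral {a..b} (\<lambda>x. Q x * \<phi> x + P x * deriv \<phi> x) = 0"
      using ftc Pa Pb by (simp add: integral_unique)
    then have "integral {a..b} (\<lambda>x. Q x * \<phi> x) + integral {a..b} (\<lambda>x. P x * deriv \<phi> x) = 0"
      using integral_add[OF i1(2) i1(1)] by simp
    then show ?thesis using e1 e2 by linarith
  qed
qed

lemma ftc_real:
  fixes F f :: "real \<Rightarrow> real"
  assumes "\<And>x. (F has_real_derivative f x) (at x)" "a \<le> b"
  shows "(f has_integral F b - F a) {a..b}"
  apply (rule fundamental_theorem_of_calculus[OF assms(2)])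
  using assms(1) has_field_derivative_at_within has_real_derivative_iff_has_vector_derivative by blast

definition pp :: "real \<Rightarrow> real" where "pp x = 4096 - 768*x^2 + 48*x^4 - x^6"
definition pp1 :: "real \<Rightarrow> real" where "pp1 x = -1536*x + 192*x^3 - 6*x^5"
definition pp2 :: "real \<Rightarrow> real" where "pp2 x = -1536 + 576*x^2 - 30*x^4"

lemma pp_deriv: "((\<lambda>x. A * pp x) has_real_derivative A * pp1 x) (at x)"
  unfolding pp_def pp1_def
  by (rule derivative_eq_intros refl | simp)+

lemma pp1_deriv: "((\<lambda>x. A * pp1 x) has_real_derivative A * pp2 x) (at x)"
  unfolding pp2_def pp1_def
  by (rule derivative_eq_intros refl | simp)+

lemma int1: "((\<lambda>x. (A * pp1 x)^2) has_integral 4294967296 * A^2 / 385) {-4..4}"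
proof -
  let ?F = "\<lambda>x::real. A^2 * (786432 * x^3 - 589824/5 * x^5 + 55296/7 * x^7 - 256 * x^9 + 36/11 * x^11)"
  have "(?F has_real_derivative (A * pp1 x)^2) (at x)" for x
    unfolding pp1_def
    by (rule derivative_eq_intros refl | simp)+ (simp add: algebra_simps power2_eq_square power_numeral_reduce)
  from ftc_real[OF this, of "-4" 4] show ?thesis by simp
qed

lemma int2: "((\<lambda>x. (A * pp2 x)^2) has_integral 268435456 * A^2 / 35) {-4..4}"
proof -
  let ?F = "\<lambda>x::real. A^2 * (2359296 * x - 589824 * x^3 + 423936/5 * x^5 - 34560/7 * x^7 + 100 * x^9)"
  have "(?F has_real_derivative (A * pp2 x)^2) (at x)" for x
    unfolding pp2_def
    by (rule derivative_eq_intros refl | simp)+ (simp add: algebra_simps power2_eq_square power_numeral_reduce)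
  from ftc_real[OF this, of "-4" 4] show ?thesis by simp
qed


lemma pp_bounds: "x \<in> {-4..4} \<Longrightarrow> 0 \<le> pp x \<and> pp x \<le> 4096"
proof -
  assume x: "x \<in> {-4..4}"
  have e: "pp x = (16 - x^2)^3" unfolding pp_def by (simp add: algebra_simps power2_eq_square power_numeral_reduce)
  have "\<bar>x\<bar> \<le> 4" using x by auto
  then have "\<bar>x\<bar>^2 \<le> 4^2" by (rule power_mono) simp
  then have "x^2 \<le> 16" by simp
  moreover have "0 \<le> x^2" by simp
  ultimately have "0 \<le> 16 - x^2" "16 - x^2 \<le> 16" by linarith+
  then show ?thesis unfolding e using power_mono[of "16 - x^2" 16 3] by simp
qed

theorem lemma4:
  fixes W W' :: "real \<Rightarrow> real"
  assumes C1: "\<And>s. (W has_real_derivative W' s) (at s)" "continuous_on UNIV W'"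
    and Wi: "\<exists>\<eta>>0. (\<forall>s. \<bar>s\<bar> \<le> 1 \<longrightarrow> W s \<ge> \<eta> * s\<^sup>2) \<and> (\<forall>s. \<bar>s\<bar> \<ge> 1 \<longrightarrow> W s \<ge> \<eta>)"
    and Wii: "(W' has_real_derivative 1) (at 0)"
    and Wiii: "\<exists>M>0. \<exists>\<alpha>. 0 \<le> \<alpha> \<and> \<alpha> < 2 \<and> (\<forall>s\<ge>0. W s \<le> M * s powr \<alpha>)"
  shows "Lambda_star W < 1"
proof -
  obtain \<eta> where eta: "\<eta> > 0" "\<And>s. \<bar>s\<bar> \<le> 1 \<Longrightarrow> W s \<ge> \<eta> * s\<^sup>2" "\<And>s. \<bar>s\<bar> \<ge> 1 \<Longrightarrow> W s \<ge> \<eta>"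
    using Wi by blast
  obtain M \<alpha> where M: "M > 0" "0 \<le> \<alpha>" "\<alpha> < 2" "\<And>s. s \<ge> 0 \<Longrightarrow> W s \<le> M * s powr \<alpha>"
    using Wiii by blast
  have Wnn: "W s \<ge> 0" for s
  proof (cases "\<bar>s\<bar> \<le> 1")
    case True then show ?thesis using eta(2)[OF True] eta(1) by (smt (verit) zero_le_power2 mult_nonneg_nonneg)
  next
    case False then show ?thesis using eta(3)[of s] eta(1) by linarith
  qed
  have W0: "W 0 = 0" using M(4)[of 0] Wnn[of 0] by simp
  define B where "B = 16 * M * 4096 powr \<alpha> + 1"
  have Bpos: "B > 0" unfolding B_def using M by (simp add: add_pos_nonneg)
  define A where "A = B powr (1 / (2 - \<alpha>))"
  have Apos: "A > 0" unfolding A_def using Bpos by simp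
  have AB: "A powr (2 - \<alpha>) = B" unfolding A_def using Bpos M(3) by (simp add: powr_powr)
  have A2: "A^2 = A powr \<alpha> * B"
  proof -
    have "A^2 = A powr 2" using Apos by (simp add: powr_numeral)
    also have "\<dots> = A powr (\<alpha> + (2 - \<alpha>))" by simp
    also have "\<dots> = A powr \<alpha> * A powr (2 - \<alpha>)" by (rule powr_add)
    also have "\<dots> = A powr \<alpha> * B" using AB by simp
    finally show ?thesis .
  qed
  define Wb where "Wb = M * (4096 * A) powr \<alpha>"
  have Wb_eq: "Wb = M * 4096 powr \<alpha> * A powr \<alpha>" unfolding Wb_def using Apos by (simp add: powr_mult)
  have key: "16 * Wb < A^2"
  proof -
    have "A powr \<alpha> > 0" using Apos by simp
    then have "16 * M * 4096 powr \<alpha> * A powr \<alpha> < A powr \<alpha> * B" unfolding B_def by (simp add: algebra_simps)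
    then show ?thesis unfolding Wb_eq A2 by (simp add: algebra_simps)
  qed
  have Wb_nn: "Wb \<ge> 0" unfolding Wb_def using M by simp
  define K :: "real set" where "K = {-4..4}"
  define u where "u = (\<lambda>x. indicator K x * (A * pp x))"
  define u1 where "u1 = (\<lambda>x. indicator K x * (A * pp1 x))"
  define u2 where "u2 = (\<lambda>x. indicator K x * (A * pp2 x))"
  have cont: "continuous_on UNIV (\<lambda>x. A * pp x)" "continuous_on UNIV (\<lambda>x. A * pp1 x)"
     "continuous_on UNIV (\<lambda>x. A * pp2 x)"
    unfolding pp_def pp1_def pp2_def by (auto intro!: continuous_intros)
  have H: "H2 u u1 u2" unfolding H2_def u_def u1_def u2_def K_def
    apply (intro conjI L2_ind cont weak_ind pp_deriv pp1_deriv)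
    by (simp_all add: pp_def pp1_def)
  have Lv: "L2 u1" using H unfolding H2_def by blast
  define a where "a = 4294967296 * A^2 / 385"
  define b where "b = 268435456 * A^2 / 35"
  have ab: "a - b = 1342177280 * A^2 / 385" unfolding a_def b_def by simp
  have apos: "a > 0" unfolding a_def using Apos by simp
  have c1: "continuous_on K (\<lambda>x. (A * pp1 x)^2)" "continuous_on K (\<lambda>x. ((A * pp1 x)^2 + (A * pp2 x)^2) / 2)"
    "continuous_on K (\<lambda>x. Wb)"
    unfolding pp1_def pp2_def by (auto intro!: continuous_intros)
  have cK: "compact K" unfolding K_def by simp
  have mom: "momentum u1 u1 = - a"
  proof -
    have "(\<lambda>x. u1 x * u1 x) = (\<lambda>x. indicator K x * (A * pp1 x)^2)"
      unfolding u1_def by (auto simp: indicator_def fun_eq_iff power2_eq_square)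
    then have "(LINT x|lborel. u1 x * u1 x) = integral K (\<lambda>x. (A * pp1 x)^2)"
      using IK(2)[OF cK c1(1)] by simp
    also have "\<dots> = a" unfolding a_def K_def using int1 by (rule integral_unique)
    finally show ?thesis unfolding momentum_def by simp
  qed
  have E1: "(\<integral>\<^sup>+ x. ennreal (((u1 x)\<^sup>2 + (u2 x)\<^sup>2) / 2) \<partial>lborel) = ennreal ((a + b) / 2)"
  proof -
    have f: "((u1 x)\<^sup>2 + (u2 x)\<^sup>2) / 2 = indicator K x * (((A * pp1 x)^2 + (A * pp2 x)^2) / 2)" for x
      unfolding u1_def u2_def by (auto simp: indicator_def power2_eq_square)
    have hi: "((\<lambda>x. ((A * pp1 x)^2 + (A * pp2 x)^2) / 2) has_integral (a + b) / 2) K"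
      unfolding K_def a_def b_def
      using has_integral_divide[OF has_integral_add[OF int1[of A] int2[of A]], of 2] by (simp only: add_divide_distrib)
    have "(\<integral>\<^sup>+ x. ennreal (((u1 x)\<^sup>2 + (u2 x)\<^sup>2) / 2) \<partial>lborel)
        = ennreal (LINT x|lborel. indicator K x * (((A * pp1 x)^2 + (A * pp2 x)^2) / 2))"
      unfolding f by (rule nn_integral_eq_integral[OF IK(1)[OF cK c1(2)]]) (auto simp: indicator_def)
    also have "\<dots> = ennreal ((a + b) / 2)" using IK(2)[OF cK c1(2)] integral_unique[OF hi] by simp
    finally show ?thesis .
  qed
  have E2: "(\<integral>\<^sup>+ x. ennreal (W (u x)) \<partial>lborel) \<le> ennreal (8 * Wb)"
  proof -
    have "(\<integral>\<^sup>+ x. ennreal (W (u x)) \<partial>lborel) \<le> (\<integral>\<^sup>+ x. ennreal (indicator K x * Wb) \<partial>lborel)"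
    proof (rule nn_integral_mono)
      fix x
      show "ennreal (W (u x)) \<le> ennreal (indicator K x * Wb)"
      proof (cases "x \<in> K")
        case True
        then have pb: "0 \<le> pp x" "pp x \<le> 4096" using pp_bounds unfolding K_def by auto
        have "W (u x) = W (A * pp x)" unfolding u_def using True by simp
        also have "\<dots> \<le> M * (A * pp x) powr \<alpha>" using M(4) pb Apos by simp
        also have "\<dots> \<le> M * (4096 * A) powr \<alpha>"
          using M pb Apos by (intro mult_left_mono powr_mono2) auto
        finally show ?thesis using True unfolding Wb_def by (simp add: ennreal_leI)
      next
        case False then show ?thesis unfolding u_def using W0 by simp
      qed
    qed
    also have "\<dots> = ennreal (LINT x|lborel. indicator K x * Wb)"
      by (rule nn_integral_eq_integral[OF IK(1)[OF cK c1(3)]]) (auto simp: indicator_def Wb_nn)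
    also have "\<dots> = ennreal (8 * Wb)" using IK(2)[OF cK c1(3)] unfolding K_def by simp
    finally show ?thesis .
  qed
  define Eb where "Eb = (a + b) / 2 + 8 * Wb"
  have Eb_nn: "Eb \<ge> 0" unfolding Eb_def a_def b_def using Wb_nn by simp
  have Ele: "energy W u u2 u1 \<le> ennreal Eb"
  proof -
    have "energy W u u2 u1 \<le> ennreal ((a + b) / 2) + ennreal (8 * Wb)"
      unfolding energy_def using E1 E2 by (metis add_left_mono)
    also have "\<dots> = ennreal Eb" unfolding Eb_def using Wb_nn apos ab
      by (subst ennreal_plus) (auto simp: a_def b_def)
    finally show ?thesis .
  qed
  have mem: "enn2ereal (energy W u u2 u1) / ereal \<bar>momentum u1 u1\<bar> \<in>
     {enn2ereal (energy W u u2 v) / ereal \<bar>momentum u1 v\<bar> | u u1 u2 v.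
       H2 u u1 u2 \<and> L2 v \<and> momentum u1 v \<noteq> 0}"
    using H Lv mom apos by fastforce
  have "Lambda_star W \<le> enn2ereal (energy W u u2 u1) / ereal a"
    unfolding Lambda_star_def using Inf_lower[OF mem] mom apos by simp
  also have "\<dots> \<le> ereal Eb / ereal a"
    using Ele Eb_nn apos by (intro ereal_divide_right_mono) (auto simp: less_eq_ennreal.rep_eq)
  also have "\<dots> = ereal (Eb / a)" using apos by simp
  also have "\<dots> < 1"
  proof -
    have "A^2 \<le> 1342177280 * A^2 / 385" by simp
    then have h: "A^2 \<le> a - b" by (subst ab)
    have "(a + b) / 2 + 8 * Wb < a" using key h by (subgoal_tac "16 * Wb < a - b") (simp_all add: field_simps)
    then have "Eb < a" unfolding Eb_def .
    then show ?thesis using apos by simp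
  qed
  finally show ?thesis .
qed

end
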